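(* In the setting below, an invertible linear operator on $U^*\oplus U$ belongs to the Mackey group $G_U=G(U^*\oplus U,U^*\oplus U)$ if and only if it is given by left multiplication by a matrix $\psi\in J$ with $\psi$ invertible and $\psi^{-1}\in J$. In other words, $G_U=\widetilde{G}_U$.
   Context: $U$ is a complex vector space with basis $\{e_1,e_2,\dots\}$. Elements of $U^*\oplus U$ are written as pairs $(\gamma,y)$ with $\gamma=(\dots,\gamma_{-2},\gamma_{-1})$ an arbitrary sequence indexed by $\mathbb{Z}_{<0}$ ($\gamma_{-i}=\gamma(e_i)$) and $y=(y_1,y_2,\dots)$ a finitary sequence (finitely many nonzero entries), regarded as a column vector indexed by the ordered set $\mathbb{Z}\setminus\{0\}=\mathbb{Z}_{<0}\sqcup\mathbb{Z}_{>0}$. $U^*\oplus U$ carries the nondegenerate pairing $\langle(\gamma,y),(\varkappa,z)\rangle=\gamma(z)+\varkappa(y)$, and $G(U^*\oplus U,U^*\oplus U)$ is the group of invertible linear $\varphi$ on $U^*\oplus U$ such that $\varphi^*$ maps $U^*\oplus U$ (embedded in $(U^*\oplus U)^*$ via the pairing) onto itself. (This is the Mackey group $G(V_E,V_{*E})$ for $V_E=(W_* )^*\oplus U$, $V_{*E}=W_*\oplus U^*$ under an identification $W_*\cong U$.) $J$ is the set of matrices $M$ with rows and columns indexed by $\mathbb{Z}\setminus\{0\}$, written in blocks $\begin{pmatrix}A&B\\ C&D\end{pmatrix}$ according to $\mathbb{Z}_{<0}\sqcup\mathbb{Z}_{>0}$, such that each row of $A$ is finitary, each column of $D$ is finitary,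 and $C$ has finitely many nonzero entries; such matrices act on $U^*\oplus U$ by left multiplication on columns. $\widetilde{G}_U$ is the group of automorphisms of $U^*\oplus U$ given by matrices $\psi$ with $\psi,\psi^{-1}\in J$. *)

theory Defs
  imports Complex_Main
begin

text \<open>Vectors of U^* (+) U are functions on the index set Z minus 0 (value 0 at index 0 by
convention): negative indices carry gamma (arbitrary), positive indices carry y (finitary).\<close>

type_synonym vec = "int \<Rightarrow> complex"
type_synonym mat = "int \<Rightarrow> int \<Rightarrow> complex"

definition VE :: "vec set" where
  "VE = {v. v 0 = 0 \<and> finite {i. 0 < i \<and> v i \<noteq> 0}}"

text \<open>The pairing <(gamma,y),(kappa,z)> = gamma(z) + kappa(y).\<close>
definition pairing :: "vec \<Rightarrow> vec \<Rightarrow> complex" where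
  "pairing v w = (\<Sum>i\<in>{i. 0 < i \<and> w i \<noteq> 0}. v (-i) * w i)
               + (\<Sum>i\<in>{i. 0 < i \<and> v i \<noteq> 0}. w (-i) * v i)"

definition linear_on_VE :: "(vec \<Rightarrow> vec) \<Rightarrow> bool" where
  "linear_on_VE \<phi> \<longleftrightarrow> (\<forall>v\<in>VE. \<forall>w\<in>VE. \<forall>a b::complex.
      \<phi> (\<lambda>i. a * v i + b * w i) = (\<lambda>i. a * \<phi> v i + b * \<phi> w i))"

text \<open>The Mackey group G(U^* (+) U, U^* (+) U): invertible linear maps whose dual maps
U^* (+) U (embedded in its dual via the pairing) onto itself.\<close>
definition mackey_G :: "(vec \<Rightarrow> vec) \<Rightarrow> bool" where
  "mackey_G \<phi> \<longleftrightarrow> linear_on_VE \<phi> \<and> bij_betw \<phi> VE VE \<and>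
     (\<forall>w\<in>VE. \<exists>w'\<in>VE. \<forall>v\<in>VE. pairing w (\<phi> v) = pairing w' v) \<and>
     (\<forall>w'\<in>VE. \<exists>w\<in>VE. \<forall>v\<in>VE. pairing w (\<phi> v) = pairing w' v)"

definition inJ :: "mat \<Rightarrow> bool" where
  "inJ M \<longleftrightarrow> (\<forall>j. M 0 j = 0) \<and> (\<forall>i. M i 0 = 0) \<and>
     (\<forall>i<0. finite {j. j < 0 \<and> M i j \<noteq> 0}) \<and>
     (\<forall>j>0. finite {i. 0 < i \<and> M i j \<noteq> 0}) \<and>
     finite {(i, j). 0 < i \<and> j < 0 \<and> M i j \<noteq> 0}"

definition mat_act :: "mat \<Rightarrow> vec \<Rightarrow> vec" where
  "mat_act M v = (\<lambda>i. if i = 0 then 0 else (\<Sum>j\<in>{j. j \<noteq> 0 \<and> M i j * v j \<noteq> 0}. M i j * v j))"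

definition mat_mult :: "mat \<Rightarrow> mat \<Rightarrow> mat" where
  "mat_mult M N = (\<lambda>i k. \<Sum>j\<in>{j. j \<noteq> 0 \<and> M i j * N j k \<noteq> 0}. M i j * N j k)"

definition mat_id :: mat where
  "mat_id = (\<lambda>i k. if i = k \<and> i \<noteq> 0 then 1 else 0)"

definition tilde_G :: "(vec \<Rightarrow> vec) \<Rightarrow> bool" where
  "tilde_G \<phi> \<longleftrightarrow> (\<exists>\<psi> \<psi>'. inJ \<psi> \<and> inJ \<psi>' \<and> mat_mult \<psi> \<psi>' = mat_id \<and> mat_mult \<psi>' \<psi> = mat_id \<and>
       (\<forall>v\<in>VE. \<phi> v = mat_act \<psi> v))"

end

theory Submission
  imports Defs "HOL-Library.Groups_Big_Fun" "HOL-Computational_Algebra.Polynomial"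
    "HOL-Analysis.Continuum_Not_Denumerable"
begin

lemma SA_mult_right: "Sum_any (\<lambda>j. g j * (c::complex)) = Sum_any g * c"
proof (cases "c = 0")
  case False
  then have e: "{j. g j * c \<noteq> 0} = {j. g j \<noteq> 0}" by auto
  show ?thesis unfolding Sum_any.expand_set e by (simp add: sum_distrib_right)
qed simp

lemma SA_mult_left: "Sum_any (\<lambda>j. (c::complex) * g j) = c * Sum_any g"
  using SA_mult_right[of g c] by (simp add: mult.commute)

lemma SA_swap:
  fixes g :: "'a \<Rightarrow> 'b \<Rightarrow> complex"
  assumes "finite {(a,b). g a b \<noteq> 0}"
  shows "Sum_any (\<lambda>a. Sum_any (g a)) = Sum_any (\<lambda>b. Sum_any (\<lambda>a. g a b))"
proof (rule Sum_any.swap)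
  let ?S = "{(a,b). g a b \<noteq> 0}"
  show "finite (fst ` ?S \<times> snd ` ?S)" using assms by auto
  show "{a. \<exists>b. g a b \<noteq> 0} \<times> {b. \<exists>a. g a b \<noteq> 0} \<subseteq> fst ` ?S \<times> snd ` ?S"
    by (auto simp: image_iff)
qed

lemma mat_act_SA:
  assumes "\<And>j. M 0 j = 0" "\<And>i. M i 0 = 0"
  shows "mat_act M v i = Sum_any (\<lambda>j. M i j * v j)"
proof -
  have "{j. j \<noteq> 0 \<and> M i j * v j \<noteq> 0} = {j. M i j * v j \<noteq> 0}" using assms by auto
  then show ?thesis using assms unfolding mat_act_def Sum_any.expand_set by auto
qed

lemma mat_mult_SA:
  assumes "\<And>i. M i 0 = 0"
  shows "mat_mult M N i k = Sum_any (\<lambda>j. M i j * N j k)"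
proof -
  have "{j. j \<noteq> 0 \<and> M i j * N j k \<noteq> 0} = {j. M i j * N j k \<noteq> 0}" using assms by auto
  then show ?thesis unfolding mat_mult_def Sum_any.expand_set by auto
qed

lemma pairing_alt:
  assumes x: "x \<in> VE" and y: "y \<in> VE"
  shows "pairing x y = Sum_any (\<lambda>i. x (-i) * y i)"
proof -
  have fy: "finite {i. 0 < i \<and> y i \<noteq> 0}" and fx: "finite {i. 0 < i \<and> x i \<noteq> 0}"
    and y0: "y 0 = 0" using x y by (auto simp: VE_def)
  let ?g1 = "\<lambda>i. if 0 < i then x (-i) * y i else 0"
  let ?g2 = "\<lambda>i. if i < 0 then x (-i) * y i else 0"
  have f1: "finite {i. ?g1 i \<noteq> 0}"
    by (rule finite_subset[OF _ fy]) auto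
  have f2: "finite {i. ?g2 i \<noteq> 0}"
    by (rule finite_subset[OF _ finite_imageI[OF fx, of uminus]]) (auto simp: image_iff intro!: exI[of _ "- _"])
  have e1: "(\<Sum>i\<in>{i. 0 < i \<and> y i \<noteq> 0}. x (-i) * y i) = Sum_any ?g1"
    by (subst Sum_any.expand_superset[OF fy]) auto
  have "(\<Sum>i\<in>{i. 0 < i \<and> x i \<noteq> 0}. y (-i) * x i) = Sum_any (\<lambda>i. if 0 < i then y (-i) * x i else 0)"
    by (subst Sum_any.expand_superset[OF fx]) auto
  also have "\<dots> = Sum_any ?g2"
    by (rule Sum_any.reindex_cong[of uminus]) (auto simp: bij_def fun_eq_iff mult.commute)
  finally have e2: "(\<Sum>i\<in>{i. 0 < i \<and> x i \<noteq> 0}. y (-i) * x i) = Sum_any ?g2" .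
  have "Sum_any ?g1 + Sum_any ?g2 = Sum_any (\<lambda>i. ?g1 i + ?g2 i)"
    using Sum_any.distrib[OF f1 f2] by simp
  also have "\<dots> = Sum_any (\<lambda>i. x (-i) * y i)"
    by (rule Sum_any.cong) (auto simp: y0)
  finally show ?thesis unfolding pairing_def e1 e2 .
qed

lemma inJ_D:
  assumes "inJ M"
  shows "M 0 j = 0" "M i 0 = 0" "i < 0 \<Longrightarrow> finite {j. j < 0 \<and> M i j \<noteq> 0}"
    "j > 0 \<Longrightarrow> finite {i. 0 < i \<and> M i j \<noteq> 0}"
    "finite {(i, j). 0 < i \<and> j < 0 \<and> M i j \<noteq> 0}"
  using assms unfolding inJ_def by auto

lemma Jneg_fin:
  assumes "inJ M"
  shows "finite {j. j < 0 \<and> M i j \<noteq> 0}"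
proof -
  consider "i < 0" | "i = 0" | "i > 0" by arith
  then show ?thesis
  proof cases
    case 1 then show ?thesis using inJ_D[OF assms] by blast
  next
    case 2 then show ?thesis using inJ_D(1)[OF assms] by simp
  next
    case 3
    have "{j. j < 0 \<and> M i j \<noteq> 0} \<subseteq> snd ` {(i, j). 0 < i \<and> j < 0 \<and> M i j \<noteq> 0}"
      using 3 by (auto simp: image_iff)
    then show ?thesis using inJ_D(5)[OF assms] finite_subset by blast
  qed
qed

lemma VE_D: "v \<in> VE \<Longrightarrow> v 0 = 0" "v \<in> VE \<Longrightarrow> finite {i. 0 < i \<and> v i \<noteq> 0}"
  by (auto simp: VE_def)

lemma SA_nz: "Sum_any g \<noteq> (0::complex) \<Longrightarrow> \<exists>j. g j \<noteq> 0"
  by (erule Sum_any.not_neutral_obtains_not_neutral) blast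

lemma mat_act_VE:
  assumes M: "inJ M" and v: "v \<in> VE"
  shows "mat_act M v \<in> VE"
proof -
  let ?C = "{(i, j). 0 < i \<and> j < 0 \<and> M i j \<noteq> 0}"
  let ?S = "{j. 0 < j \<and> v j \<noteq> 0}"
  have "{i. 0 < i \<and> mat_act M v i \<noteq> 0} \<subseteq> fst ` ?C \<union> (\<Union>j\<in>?S. {i. 0 < i \<and> M i j \<noteq> 0})"
  proof (rule subsetI)
    fix i assume "i \<in> {i. 0 < i \<and> mat_act M v i \<noteq> 0}"
    then have i: "0 < i" "mat_act M v i \<noteq> 0" by auto
    have "Sum_any (\<lambda>j. M i j * v j) \<noteq> 0" using i(2) mat_act_SA[of M v i] inJ_D(1,2)[OF M] by simp
    then obtain j where j: "M i j * v j \<noteq> 0" using SA_nz by blast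
    then have "j \<noteq> 0" using inJ_D(2)[OF M] by auto
    show "i \<in> fst ` ?C \<union> (\<Union>j\<in>?S. {i. 0 < i \<and> M i j \<noteq> 0})"
    proof (cases "j < 0")
      case True then have "(i,j) \<in> ?C" using i j by auto
      then show ?thesis by force
    next
      case False then have "j > 0" "v j \<noteq> 0" "M i j \<noteq> 0" using j \<open>j \<noteq> 0\<close> by auto
      then show ?thesis using i by blast
    qed
  qed
  moreover have "finite (fst ` ?C \<union> (\<Union>j\<in>?S. {i. 0 < i \<and> M i j \<noteq> 0}))"
    using inJ_D(5)[OF M] inJ_D(4)[OF M] VE_D(2)[OF v]
    by (intro finite_UnI finite_imageI finite_UN_I) auto
  ultimately have "finite {i. 0 < i \<and> mat_act M v i \<noteq> 0}" using finite_subset by blast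
  moreover have "mat_act M v 0 = 0" by (simp add: mat_act_def)
  ultimately show ?thesis by (simp add: VE_def)
qed

lemma triple_fin:
  assumes M: "inJ M" and N: "inJ N" and v: "v \<in> VE"
  shows "finite {(j,k). M i j * N j k * v k \<noteq> 0}"
proof -
  let ?S = "{k. 0 < k \<and> v k \<noteq> 0}"
  let ?Jn = "{j. j < 0 \<and> M i j \<noteq> 0}"
  let ?C = "{(j, k). 0 < j \<and> k < 0 \<and> N j k \<noteq> 0}"
  let ?T = "(\<Union>k\<in>?S. {j. 0 < j \<and> N j k \<noteq> 0} \<times> {k}) \<union> (?Jn \<times> ?S) \<union> ?C
     \<union> (\<Union>j\<in>?Jn. {j} \<times> {k. k < 0 \<and> N j k \<noteq> 0})"
  have fin: "finite ?T"
  proof (intro finite_UnI)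
    show "finite (\<Union>k\<in>?S. {j. 0 < j \<and> N j k \<noteq> 0} \<times> {k})"
    proof (rule finite_UN_I)
      show "finite ?S" using VE_D(2)[OF v] .
      fix k assume "k \<in> ?S"
      then have "finite {j. 0 < j \<and> N j k \<noteq> 0}" using inJ_D(4)[OF N] by simp
      then show "finite ({j. 0 < j \<and> N j k \<noteq> 0} \<times> {k})" by simp
    qed
    show "finite (?Jn \<times> ?S)" using VE_D(2)[OF v] Jneg_fin[OF M] by (rule finite_cartesian_product[rotated])
    show "finite ?C" using inJ_D(5)[OF N] .
    show "finite (\<Union>j\<in>?Jn. {j} \<times> {k. k < 0 \<and> N j k \<noteq> 0})"
    proof (rule finite_UN_I)
      show "finite ?Jn" using Jneg_fin[OF M] .
      fix j show "finite ({j} \<times> {k. k < 0 \<and> N j k \<noteq> 0})" using Jneg_fin[OF N, of j] by simp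
    qed
  qed
  have "{(j,k). M i j * N j k * v k \<noteq> 0} \<subseteq> ?T"
  proof (rule subsetI)
    fix p assume "p \<in> {(j,k). M i j * N j k * v k \<noteq> 0}"
    then obtain j k where p: "p = (j,k)" and nz: "M i j * N j k * v k \<noteq> 0" by auto
    then have j0: "j \<noteq> 0" using inJ_D(2)[OF M] by auto
    have k0: "k \<noteq> 0" using nz VE_D(1)[OF v] by auto
    have nz': "M i j \<noteq> 0" "N j k \<noteq> 0" "v k \<noteq> 0" using nz by auto
    consider "k > 0" "j > 0" | "k > 0" "j < 0" | "k < 0" "j > 0" | "k < 0" "j < 0"
      using j0 k0 by arith
    then show "p \<in> ?T"
    proof cases
      case 1
      then have "(j,k) \<in> {j. 0 < j \<and> N j k \<noteq> 0} \<times> {k}" "k \<in> ?S" using nz' by auto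
      then show ?thesis unfolding p by blast
    next
      case 2
      then have "(j,k) \<in> ?Jn \<times> ?S" using nz' by auto
      then show ?thesis unfolding p by blast
    next
      case 3
      then have "(j,k) \<in> ?C" using nz' by auto
      then show ?thesis unfolding p by blast
    next
      case 4
      then have "(j,k) \<in> {j} \<times> {k. k < 0 \<and> N j k \<noteq> 0}" "j \<in> ?Jn" using nz' by auto
      then show ?thesis unfolding p by blast
    qed
  qed
  then show ?thesis using fin finite_subset by blast
qed

definition rowmat :: "vec \<Rightarrow> mat" where
  "rowmat w = (\<lambda>i j. if i = -1 \<and> j \<noteq> 0 then w (-j) else 0)"

lemma rowmat_J:
  assumes w: "w \<in> VE" shows "inJ (rowmat w)"
proof -
  have "{j. j < 0 \<and> rowmat w (-1) j \<noteq> 0} \<subseteq> uminus ` {i. 0 < i \<and> w i \<noteq> 0}"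
  proof
    fix j assume "j \<in> {j. j < 0 \<and> rowmat w (-1) j \<noteq> 0}"
    then have "j < 0" "w (-j) \<noteq> 0" by (auto simp: rowmat_def split: if_splits)
    then show "j \<in> uminus ` {i. 0 < i \<and> w i \<noteq> 0}" by (intro image_eqI[of _ _ "-j"]) auto
  qed
  then have f1: "finite {j. j < 0 \<and> rowmat w (-1) j \<noteq> 0}"
    using VE_D(2)[OF w] finite_subset by blast
  have e2: "\<And>i. i \<noteq> -1 \<Longrightarrow> {j. j < 0 \<and> rowmat w i j \<noteq> 0} = {}"
    by (simp add: rowmat_def)
  have e3: "{(i, j). 0 < i \<and> j < 0 \<and> rowmat w i j \<noteq> 0} = {}"
    by (auto simp: rowmat_def)
  have e4: "\<And>j. {i. 0 < i \<and> rowmat w i j \<noteq> 0} = {}"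
    by (auto simp: rowmat_def)
  show ?thesis unfolding inJ_def
  proof (intro conjI allI impI)
    fix i :: int assume "i < 0"
    show "finite {j. j < 0 \<and> rowmat w i j \<noteq> 0}"
    proof (cases "i = -1")
      case True then show ?thesis using f1 by simp
    next
      case False then show ?thesis unfolding e2[OF False] by simp
    qed
  next
    fix j show "rowmat w 0 j = 0" by (simp add: rowmat_def)
  next
    fix i show "rowmat w i 0 = 0" by (simp add: rowmat_def)
  next
    fix j :: int show "finite {i. 0 < i \<and> rowmat w i j \<noteq> 0}" unfolding e4 by simp
  next
    show "finite {(i, j). 0 < i \<and> j < 0 \<and> rowmat w i j \<noteq> 0}" unfolding e3 by simp
  qed
qed


lemma row_fin:
  assumes M: "inJ M" and v: "v \<in> VE"
  shows "finite {j. M i j * v j \<noteq> 0}"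
proof -
  have "{j. M i j * v j \<noteq> 0} \<subseteq> {j. j < 0 \<and> M i j \<noteq> 0} \<union> {j. 0 < j \<and> v j \<noteq> 0}"
    using inJ_D(2)[OF M] by (auto simp: not_less) (metis less_le)
  then show ?thesis using Jneg_fin[OF M] VE_D(2)[OF v] finite_subset by blast
qed

lemma assoc_id:
  assumes M: "inJ M" and N: "inJ N" and NM: "mat_mult N M = mat_id" and v: "v \<in> VE"
  shows "mat_act N (mat_act M v) = v"
proof
  fix i
  have M0: "\<And>j. M 0 j = 0" "\<And>i. M i 0 = 0" using inJ_D[OF M] by auto
  have N0: "\<And>j. N 0 j = 0" "\<And>i. N i 0 = 0" using inJ_D[OF N] by auto
  have "mat_act N (mat_act M v) i = Sum_any (\<lambda>j. N i j * mat_act M v j)"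
    using mat_act_SA[of N] N0 by blast
  also have "\<dots> = Sum_any (\<lambda>j. Sum_any (\<lambda>k. N i j * (M j k * v k)))"
    by (rule Sum_any.cong) (simp add: mat_act_SA[of M, OF M0] SA_mult_left)
  also have "\<dots> = Sum_any (\<lambda>k. Sum_any (\<lambda>j. N i j * (M j k * v k)))"
  proof (rule SA_swap)
    show "finite {(j, k). N i j * (M j k * v k) \<noteq> 0}"
      using triple_fin[OF N M v, of i] by (simp add: mult.assoc)
  qed
  also have "\<dots> = Sum_any (\<lambda>k. mat_mult N M i k * v k)"
  proof (rule Sum_any.cong)
    fix k
    have "Sum_any (\<lambda>j. N i j * (M j k * v k)) = Sum_any (\<lambda>j. N i j * M j k * v k)"
      by (simp add: mult.assoc)
    also have "\<dots> = Sum_any (\<lambda>j. N i j * M j k) * v k" by (rule SA_mult_right)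
    also have "\<dots> = mat_mult N M i k * v k" using mat_mult_SA[of N] N0 by simp
    finally show "Sum_any (\<lambda>j. N i j * (M j k * v k)) = mat_mult N M i k * v k" .
  qed
  also have "\<dots> = Sum_any (\<lambda>k. if k = i then (if i \<noteq> 0 then v i else 0) else 0)"
    by (rule Sum_any.cong) (auto simp: NM mat_id_def)
  also have "\<dots> = v i" using VE_D(1)[OF v] by (cases "i = 0") auto
  finally show "mat_act N (mat_act M v) i = v i" .
qed

definition adjv :: "mat \<Rightarrow> vec \<Rightarrow> vec" where
  "adjv M w = (\<lambda>m. Sum_any (\<lambda>i. w (-i) * M i (-m)))"

lemma adjv_VE:
  assumes M: "inJ M" and w: "w \<in> VE"
  shows "adjv M w \<in> VE"
proof -
  let ?C = "{(i, j). 0 < i \<and> j < 0 \<and> M i j \<noteq> 0}"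
  let ?W = "{i. i < 0 \<and> w (-i) \<noteq> 0}"
  have "?W \<subseteq> uminus ` {i. 0 < i \<and> w i \<noteq> 0}"
  proof
    fix i assume "i \<in> ?W"
    then show "i \<in> uminus ` {i. 0 < i \<and> w i \<noteq> 0}" by (intro image_eqI[of _ _ "-i"]) auto
  qed
  then have fW: "finite ?W" using VE_D(2)[OF w] finite_subset by blast
  have sub: "{m. 0 < m \<and> adjv M w m \<noteq> 0} \<subseteq> uminus ` (snd ` ?C \<union> (\<Union>i\<in>?W. {j. j < 0 \<and> M i j \<noteq> 0}))"
  proof
    fix m assume "m \<in> {m. 0 < m \<and> adjv M w m \<noteq> 0}"
    then have m: "0 < m" "Sum_any (\<lambda>i. w (-i) * M i (-m)) \<noteq> 0" by (auto simp: adjv_def)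
    then obtain i where i: "w (-i) * M i (-m) \<noteq> 0" using SA_nz by blast
    then have i0: "i \<noteq> 0" using inJ_D(1)[OF M] by auto
    have "-m \<in> snd ` ?C \<union> (\<Union>i\<in>?W. {j. j < 0 \<and> M i j \<noteq> 0})"
    proof (cases "i > 0")
      case True
      then have "(i, -m) \<in> ?C" using i m by auto
      then have "-m \<in> snd ` ?C" by (intro image_eqI[of _ _ "(i,-m)"]) auto
      then show ?thesis by blast
    next
      case False
      then have "i \<in> ?W" "-m \<in> {j. j < 0 \<and> M i j \<noteq> 0}" using i i0 m by auto
      then show ?thesis by blast
    qed
    then show "m \<in> uminus ` (snd ` ?C \<union> (\<Union>i\<in>?W. {j. j < 0 \<and> M i j \<noteq> 0}))"
      by (intro image_eqI[of _ _ "-m"]) auto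
  qed
  have fin: "finite (uminus ` (snd ` ?C \<union> (\<Union>i\<in>?W. {j. j < 0 \<and> M i j \<noteq> 0})))"
    using inJ_D(5)[OF M] fW Jneg_fin[OF M] by blast
  have "adjv M w 0 = 0" using inJ_D(2)[OF M] by (simp add: adjv_def)
  then show ?thesis using finite_subset[OF sub fin] by (simp add: VE_def)
qed

lemma adjv_pairing:
  assumes M: "inJ M" and w: "w \<in> VE" and v: "v \<in> VE"
  shows "pairing w (mat_act M v) = pairing (adjv M w) v"
proof -
  have M0: "\<And>j. M 0 j = 0" "\<And>i. M i 0 = 0" using inJ_D[OF M] by auto
  have "pairing w (mat_act M v) = Sum_any (\<lambda>i. w (-i) * mat_act M v i)"
    using pairing_alt[OF w mat_act_VE[OF M v]] .
  also have "\<dots> = Sum_any (\<lambda>i. Sum_any (\<lambda>j. w (-i) * M i j * v j))"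
    by (rule Sum_any.cong) (simp add: mat_act_SA[of M, OF M0] SA_mult_left mult.assoc)
  also have "\<dots> = Sum_any (\<lambda>j. Sum_any (\<lambda>i. w (-i) * M i j * v j))"
  proof (rule SA_swap)
    have "{(i, j). w (-i) * M i j * v j \<noteq> 0} = {(a, b). rowmat w (-1) a * M a b * v b \<noteq> 0}"
      using M0 by (auto simp: rowmat_def M0 split: if_split_asm)
    then show "finite {(i, j). w (-i) * M i j * v j \<noteq> 0}"
      using triple_fin[OF rowmat_J[OF w] M v, of "-1"] by simp
  qed
  also have "\<dots> = Sum_any (\<lambda>j. adjv M w (-j) * v j)"
    by (rule Sum_any.cong) (simp add: SA_mult_right adjv_def)
  also have "\<dots> = pairing (adjv M w) v"
    using pairing_alt[OF adjv_VE[OF M w] v] by simp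
  finally show ?thesis .
qed

lemma tilde_imp_mackey:
  assumes "tilde_G \<phi>" shows "mackey_G \<phi>"
proof -
  obtain \<psi> \<psi>' where J: "inJ \<psi>" "inJ \<psi>'" and m1: "mat_mult \<psi> \<psi>' = mat_id"
    and m2: "mat_mult \<psi>' \<psi> = mat_id" and phi: "\<And>v. v \<in> VE \<Longrightarrow> \<phi> v = mat_act \<psi> v"
    using assms unfolding tilde_G_def by blast
  have P0: "\<And>j. \<psi> 0 j = 0" "\<And>i. \<psi> i 0 = 0" using inJ_D[OF J(1)] by auto
  have lin: "linear_on_VE \<phi>" unfolding linear_on_VE_def
  proof (intro ballI allI)
    fix v w a b assume v: "v \<in> VE" and w: "w \<in> VE"
    let ?u = "\<lambda>i. a * v i + b * w i"
    have "{i. 0 < i \<and> ?u i \<noteq> 0} \<subseteq> {i. 0 < i \<and> v i \<noteq> 0} \<union> {i. 0 < i \<and> w i \<noteq> 0}" by auto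
    then have "?u \<in> VE" using VE_D[OF v] VE_D[OF w] finite_subset by (auto simp: VE_def)
    then have "\<phi> ?u = mat_act \<psi> ?u" by (rule phi)
    also have "\<dots> = (\<lambda>i. a * mat_act \<psi> v i + b * mat_act \<psi> w i)"
    proof
      fix i
      have f1: "finite {j. a * (\<psi> i j * v j) \<noteq> 0}"
        using row_fin[OF J(1) v, of i] by (rule finite_subset[rotated]) auto
      have f2: "finite {j. b * (\<psi> i j * w j) \<noteq> 0}"
        using row_fin[OF J(1) w, of i] by (rule finite_subset[rotated]) auto
      have "mat_act \<psi> ?u i = Sum_any (\<lambda>j. a * (\<psi> i j * v j) + b * (\<psi> i j * w j))"
        by (simp add: mat_act_SA[of \<psi>, OF P0] algebra_simps)
      also have "\<dots> = a * mat_act \<psi> v i + b * mat_act \<psi> w i"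
        by (simp add: Sum_any.distrib[OF f1 f2] SA_mult_left mat_act_SA[of \<psi>, OF P0])
      finally show "mat_act \<psi> ?u i = a * mat_act \<psi> v i + b * mat_act \<psi> w i" .
    qed
    finally show "\<phi> ?u = (\<lambda>i. a * \<phi> v i + b * \<phi> w i)" using phi v w by simp
  qed
  have bij: "bij_betw \<phi> VE VE"
  proof (rule bij_betw_imageI)
    show "inj_on \<phi> VE"
    proof
      fix x y assume "x \<in> VE" "y \<in> VE" "\<phi> x = \<phi> y"
      then show "x = y" using assoc_id[OF J(1) J(2) m2] phi by metis
    qed
    show "\<phi> ` VE = VE"
    proof
      show "\<phi> ` VE \<subseteq> VE" using phi mat_act_VE[OF J(1)] by auto
      show "VE \<subseteq> \<phi> ` VE"
      proof
        fix u assume u: "u \<in> VE"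
        then have "\<phi> (mat_act \<psi>' u) = u" using phi mat_act_VE[OF J(2) u] assoc_id[OF J(2) J(1) m1 u] by simp
        then show "u \<in> \<phi> ` VE" using mat_act_VE[OF J(2) u] by (metis image_eqI)
      qed
    qed
  qed
  have c1: "\<forall>w\<in>VE. \<exists>w'\<in>VE. \<forall>v\<in>VE. pairing w (\<phi> v) = pairing w' v"
    using adjv_VE[OF J(1)] adjv_pairing[OF J(1)] phi by metis
  have c2: "\<forall>w'\<in>VE. \<exists>w\<in>VE. \<forall>v\<in>VE. pairing w (\<phi> v) = pairing w' v"
  proof
    fix w' assume w': "w' \<in> VE"
    show "\<exists>w\<in>VE. \<forall>v\<in>VE. pairing w (\<phi> v) = pairing w' v"
    proof (intro bexI ballI)
      show "adjv \<psi>' w' \<in> VE" using adjv_VE[OF J(2) w'] .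
      fix v assume v: "v \<in> VE"
      have "pairing (adjv \<psi>' w') (\<phi> v) = pairing w' (mat_act \<psi>' (mat_act \<psi> v))"
        using adjv_pairing[OF J(2) w' mat_act_VE[OF J(1) v]] phi[OF v] by simp
      then show "pairing (adjv \<psi>' w') (\<phi> v) = pairing w' v"
        using assoc_id[OF J(1) J(2) m2 v] by simp
    qed
  qed
  show ?thesis unfolding mackey_G_def using lin bij c1 c2 by blast
qed


definition delta :: "int \<Rightarrow> vec" where
  "delta k = (\<lambda>i. if i = k then 1 else 0)"

lemma delta_VE: "k \<noteq> 0 \<Longrightarrow> delta k \<in> VE"
proof -
  assume k: "k \<noteq> 0"
  have "{i. 0 < i \<and> delta k i \<noteq> 0} \<subseteq> {k}" by (auto simp: delta_def)
  then show ?thesis using k finite_subset by (auto simp: VE_def delta_def)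
qed

lemma SA_delta_right: "Sum_any (\<lambda>j. f j * delta k j) = (f k :: complex)"
proof -
  have "Sum_any (\<lambda>j. f j * delta k j) = Sum_any (\<lambda>j. if j = k then f j else 0)"
    by (rule Sum_any.cong) (simp add: delta_def)
  then show ?thesis by simp
qed

lemma pairing_delta:
  assumes y: "y \<in> VE" and i: "i \<noteq> 0"
  shows "pairing (delta (-i)) y = y i"
proof -
  have "pairing (delta (-i)) y = Sum_any (\<lambda>k. delta (-i) (-k) * y k)"
    using pairing_alt[OF delta_VE y] i by simp
  also have "\<dots> = Sum_any (\<lambda>k. if k = i then y k else 0)"
    by (rule Sum_any.cong) (auto simp: delta_def)
  finally show ?thesis by simp
qed

lemma mat_act_delta:
  assumes "inJ M" shows "mat_act M (delta k) = (\<lambda>j. M j k)"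
proof
  fix j show "mat_act M (delta k) j = M j k"
    using mat_act_SA[of M "delta k" j] inJ_D[OF assms] SA_delta_right[of "M j" k] by simp
qed

lemma cset_fin:
  fixes \<psi> :: mat
  assumes rowfin: "\<And>i. finite {j. j < 0 \<and> \<psi> i j \<noteq> 0}"
    and rep: "\<And>v i. v \<in> VE \<Longrightarrow> \<phi> v i = Sum_any (\<lambda>j. \<psi> i j * v j)"
    and into: "\<And>v. v \<in> VE \<Longrightarrow> \<phi> v \<in> VE"
  shows "finite {(i, j). 0 < i \<and> j < 0 \<and> \<psi> i j \<noteq> 0}"
proof (rule ccontr)
  assume inf: "\<not> ?thesis"
  let ?Jn = "\<lambda>i. {j. j < 0 \<and> \<psi> i j \<noteq> 0}"
  define R where "R = {i. 0 < i \<and> (\<exists>j<0. \<psi> i j \<noteq> 0)}"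
  have "{(i, j). 0 < i \<and> j < 0 \<and> \<psi> i j \<noteq> 0} \<subseteq> (\<Union>i\<in>R. {i} \<times> ?Jn i)"
  proof (rule subsetI)
    fix p assume "p \<in> {(i, j). 0 < i \<and> j < 0 \<and> \<psi> i j \<noteq> 0}"
    then obtain i j where p: "p = (i,j)" "0 < i" "j < 0" "\<psi> i j \<noteq> 0" by blast
    then have "i \<in> R" by (auto simp: R_def)
    moreover have "p \<in> {i} \<times> ?Jn i" using p by simp
    ultimately show "p \<in> (\<Union>i\<in>R. {i} \<times> ?Jn i)" by (rule UN_I)
  qed
  have infR: "infinite R"
  proof
    assume "finite R"
    then have "finite (\<Union>i\<in>R. {i} \<times> ?Jn i)" by (rule finite_UN_I) (simp add: rowfin)
    then show False using inf \<open>{(i, j). 0 < i \<and> j < 0 \<and> \<psi> i j \<noteq> 0} \<subseteq> _\<close> finite_subset by blast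
  qed
  define p where "p i = (\<Sum>j\<in>?Jn i. monom (\<psi> i j) (nat (-j)))" for i
  have pnz: "p i \<noteq> 0" if iR: "i \<in> R" for i
  proof -
    obtain j0 where j0: "j0 < 0" "\<psi> i j0 \<noteq> 0" using iR by (auto simp: R_def)
    have "coeff (p i) (nat (-j0)) = (\<Sum>j\<in>?Jn i. if nat (-j) = nat (-j0) then \<psi> i j else 0)"
      by (simp add: p_def coeff_sum)
    also have "\<dots> = (\<Sum>j\<in>?Jn i. if j = j0 then \<psi> i j else 0)"
      by (rule sum.cong) (use j0 in auto)
    also have "\<dots> = \<psi> i j0" using j0 rowfin by simp
    finally show ?thesis using j0 by auto
  qed
  define Z where "Z = (\<Union>i\<in>R. {x. poly (p i) x = 0})"
  have "countable Z" unfolding Z_def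
  proof (rule countable_UN)
    show "countable R" by (rule countableI_type)
    fix i assume "i \<in> R"
    then show "countable {x. poly (p i) x = 0}" using pnz poly_roots_finite countable_finite by blast
  qed
  then have "Z \<noteq> UNIV" using uncountable_UNIV_complex by auto
  then obtain x where x: "x \<notin> Z" by blast
  define v where "v = (\<lambda>j::int. if j < 0 then x ^ nat (-j) else 0)"
  have v: "v \<in> VE" by (simp add: VE_def v_def)
  have "R \<subseteq> {i. 0 < i \<and> \<phi> v i \<noteq> 0}"
  proof
    fix i assume i: "i \<in> R"
    have "\<phi> v i = Sum_any (\<lambda>j. \<psi> i j * v j)" using rep[OF v] .
    also have "\<dots> = (\<Sum>j\<in>?Jn i. \<psi> i j * v j)"
      by (rule Sum_any.expand_superset) (auto simp: rowfin v_def split: if_splits)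
    also have "\<dots> = (\<Sum>j\<in>?Jn i. \<psi> i j * x ^ nat (-j))"
      by (rule sum.cong) (auto simp: v_def)
    also have "\<dots> = poly (p i) x" by (simp add: p_def poly_sum poly_monom)
    finally have "\<phi> v i = poly (p i) x" .
    moreover have "poly (p i) x \<noteq> 0" using x i by (auto simp: Z_def)
    ultimately show "i \<in> {i. 0 < i \<and> \<phi> v i \<noteq> 0}" using i by (auto simp: R_def)
  qed
  then have "finite R" using VE_D(2)[OF into[OF v]] finite_subset by blast
  then show False using infR by simp
qed


lemma adjoint_matrix:
  fixes \<phi> :: "vec \<Rightarrow> vec"
  assumes into: "\<And>v. v \<in> VE \<Longrightarrow> \<phi> v \<in> VE"
    and adj: "\<forall>w\<in>VE. \<exists>w'\<in>VE. \<forall>v\<in>VE. pairing w (\<phi> v) = pairing w' v"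
  shows "\<exists>\<psi>. inJ \<psi> \<and> (\<forall>v\<in>VE. \<phi> v = mat_act \<psi> v)"
proof -
  have "\<forall>i. \<exists>w'. i \<noteq> 0 \<longrightarrow> w' \<in> VE \<and> (\<forall>v\<in>VE. pairing (delta (-i)) (\<phi> v) = pairing w' v)"
    using adj delta_VE by (metis neg_equal_0_iff_equal)
  then obtain r where r: "\<And>i. i \<noteq> 0 \<Longrightarrow> r i \<in> VE"
    "\<And>i v. i \<noteq> 0 \<Longrightarrow> v \<in> VE \<Longrightarrow> pairing (delta (-i)) (\<phi> v) = pairing (r i) v"
    by metis
  define \<psi> where "\<psi> i j = (if i = 0 \<or> j = 0 then 0 else r i (-j))" for i j
  have P0: "\<And>j. \<psi> 0 j = 0" "\<And>i. \<psi> i 0 = 0" by (auto simp: \<psi>_def)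
  have rep: "\<phi> v i = Sum_any (\<lambda>j. \<psi> i j * v j)" if v: "v \<in> VE" for v i
  proof (cases "i = 0")
    case True then show ?thesis using VE_D(1)[OF into[OF v]] by (simp add: P0)
  next
    case False
    have "\<phi> v i = pairing (delta (-i)) (\<phi> v)" using pairing_delta[OF into[OF v] False] by simp
    also have "\<dots> = pairing (r i) v" using r(2)[OF False v] .
    also have "\<dots> = Sum_any (\<lambda>j. r i (-j) * v j)" using pairing_alt[OF r(1)[OF False] v] .
    also have "\<dots> = Sum_any (\<lambda>j. \<psi> i j * v j)"
      by (rule Sum_any.cong) (use False VE_D(1)[OF v] in \<open>auto simp: \<psi>_def\<close>)
    finally show ?thesis .
  qed
  have col: "\<psi> i j = \<phi> (delta j) i" if "j \<noteq> 0" for i j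
    using rep[OF delta_VE[OF that]] SA_delta_right by simp
  have rowfin: "finite {j. j < 0 \<and> \<psi> i j \<noteq> 0}" for i
  proof (cases "i = 0")
    case True then show ?thesis by (simp add: P0)
  next
    case False
    have "{j. j < 0 \<and> \<psi> i j \<noteq> 0} \<subseteq> uminus ` {m. 0 < m \<and> r i m \<noteq> 0}"
    proof
      fix j assume "j \<in> {j. j < 0 \<and> \<psi> i j \<noteq> 0}"
      then have "j < 0" "r i (-j) \<noteq> 0" by (auto simp: \<psi>_def split: if_splits)
      then show "j \<in> uminus ` {m. 0 < m \<and> r i m \<noteq> 0}" by (intro image_eqI[of _ _ "-j"]) auto
    qed
    then show ?thesis using VE_D(2)[OF r(1)[OF False]] finite_subset by blast
  qed
  have colfin: "finite {i. 0 < i \<and> \<psi> i j \<noteq> 0}" if "j > 0" for j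
  proof -
    have "{i. 0 < i \<and> \<psi> i j \<noteq> 0} = {i. 0 < i \<and> \<phi> (delta j) i \<noteq> 0}" using col[of j] that by auto
    then show ?thesis using VE_D(2)[OF into[OF delta_VE]] that by simp
  qed
  have cf: "finite {(i, j). 0 < i \<and> j < 0 \<and> \<psi> i j \<noteq> 0}"
    by (rule cset_fin[of \<psi> \<phi>]) (use rowfin rep into in auto)
  have J: "inJ \<psi>" unfolding inJ_def using P0 rowfin colfin cf by blast
  have "\<forall>v\<in>VE. \<phi> v = mat_act \<psi> v"
  proof
    fix v assume v: "v \<in> VE"
    show "\<phi> v = mat_act \<psi> v"
    proof
      fix i show "\<phi> v i = mat_act \<psi> v i" using rep[OF v] mat_act_SA[of \<psi>, OF P0] by simp
    qed
  qed
  then show ?thesis using J by blast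
qed

lemma prod_id:
  assumes A: "inJ A" and B: "inJ B"
    and f: "\<And>v. v \<in> VE \<Longrightarrow> f v = mat_act A v"
    and g: "\<And>v. v \<in> VE \<Longrightarrow> g v = mat_act B v"
    and gi: "\<And>v. v \<in> VE \<Longrightarrow> g v \<in> VE"
    and fg: "\<And>v. v \<in> VE \<Longrightarrow> f (g v) = v"
  shows "mat_mult A B = mat_id"
proof (intro ext)
  fix i k
  have A0: "\<And>j. A 0 j = 0" "\<And>i. A i 0 = 0" using inJ_D[OF A] by auto
  have B0: "\<And>j. B 0 j = 0" "\<And>i. B i 0 = 0" using inJ_D[OF B] by auto
  show "mat_mult A B i k = mat_id i k"
  proof (cases "k = 0")
    case True then show ?thesis using mat_mult_SA[of A B i k] A0 B0 by (simp add: mat_id_def)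
  next
    case False
    have gd: "g (delta k) = (\<lambda>j. B j k)" using g[OF delta_VE[OF False]] mat_act_delta[OF B] by simp
    have "mat_mult A B i k = Sum_any (\<lambda>j. A i j * B j k)" using mat_mult_SA[of A B i k] A0 by simp
    also have "\<dots> = mat_act A (g (delta k)) i" using mat_act_SA[of A, OF A0] gd by simp
    also have "\<dots> = f (g (delta k)) i" using f[OF gi[OF delta_VE[OF False]]] by simp
    also have "\<dots> = delta k i" using fg[OF delta_VE[OF False]] by simp
    also have "\<dots> = mat_id i k" using False by (auto simp: delta_def mat_id_def)
    finally show ?thesis .
  qed
qed

lemma mackey_imp_tilde:
  assumes "mackey_G \<phi>" shows "tilde_G \<phi>"
proof -
  have bij: "bij_betw \<phi> VE VE"
    and c1: "\<forall>w\<in>VE. \<exists>w'\<in>VE. \<forall>v\<in>VE. pairing w (\<phi> v) = pairing w' v"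
    and c2: "\<forall>w'\<in>VE. \<exists>w\<in>VE. \<forall>v\<in>VE. pairing w (\<phi> v) = pairing w' v"
    using assms unfolding mackey_G_def by blast+
  define g where "g = inv_into VE \<phi>"
  have into: "\<And>v. v \<in> VE \<Longrightarrow> \<phi> v \<in> VE" using bij bij_betwE by blast
  have gbij: "bij_betw g VE VE" unfolding g_def by (rule bij_betw_inv_into[OF bij])
  have ginto: "\<And>v. v \<in> VE \<Longrightarrow> g v \<in> VE" using gbij bij_betwE by blast
  have fg: "\<And>v. v \<in> VE \<Longrightarrow> \<phi> (g v) = v"
    unfolding g_def using bij by (simp add: bij_betw_def f_inv_into_f)
  have gf: "\<And>v. v \<in> VE \<Longrightarrow> g (\<phi> v) = v"
    unfolding g_def using bij by (simp add: bij_betw_def inv_into_f_f)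
  have gc1: "\<forall>w\<in>VE. \<exists>w'\<in>VE. \<forall>v\<in>VE. pairing w (g v) = pairing w' v"
  proof
    fix w assume w: "w \<in> VE"
    then obtain x where x: "x \<in> VE" "\<And>u. u \<in> VE \<Longrightarrow> pairing x (\<phi> u) = pairing w u"
      using c2 by blast
    show "\<exists>w'\<in>VE. \<forall>v\<in>VE. pairing w (g v) = pairing w' v"
    proof (intro bexI ballI)
      fix v assume v: "v \<in> VE"
      show "pairing w (g v) = pairing x v" using x(2)[OF ginto[OF v]] fg[OF v] by simp
    qed (rule x(1))
  qed
  obtain \<psi> where P: "inJ \<psi>" "\<forall>v\<in>VE. \<phi> v = mat_act \<psi> v"
    using adjoint_matrix[OF into c1] by blast
  obtain \<psi>' where P': "inJ \<psi>'" "\<forall>v\<in>VE. g v = mat_act \<psi>' v"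
    using adjoint_matrix[OF ginto gc1] by blast
  have m1: "mat_mult \<psi> \<psi>' = mat_id"
    by (rule prod_id[OF P(1) P'(1), of \<phi> g]) (use P P' ginto fg in auto)
  have m2: "mat_mult \<psi>' \<psi> = mat_id"
    by (rule prod_id[OF P'(1) P(1), of g \<phi>]) (use P P' into gf in auto)
  show ?thesis unfolding tilde_G_def using P P' m1 m2 by blast
qed

theorem theoremA8:
  fixes \<phi> :: "vec \<Rightarrow> vec"
  shows "mackey_G \<phi> \<longleftrightarrow> tilde_G \<phi>"
  using mackey_imp_tilde tilde_imp_mackey by blast

end
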